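(* If $\pi\le\beta_1<\beta_2\le\beta_{cr}$, then $g(\beta_1,\theta)<g(\beta_2,\theta)$ for all $\theta\in(0,\pi/2]$.
   Context: $\beta_{cr}\in(\pi,2\pi)$ is the unique solution in $(\pi,2\pi)$ of $\tan\big(\frac{\beta_{cr}-\pi}{4}\big)=4\big(\Gamma(3/4)/\Gamma(1/4)\big)^2$. For $\pi\le\beta\le\beta_{cr}$, let $\psi_\beta$ be the function on $(0,\beta)$, symmetric about $\beta/2$, with $\psi_\beta(\theta)=\cos\big(\tfrac12(\beta/2-\theta)\big)$ for $\pi/2\le\theta\le\beta-\pi/2$, and which on $(0,\pi/2]$ solves $\psi''+\psi/(4\sin^2\theta)=0$ with $\psi(\pi/2)=\cos((\beta-\pi)/4)$, $\psi'(\pi/2)=\tfrac12\sin((\beta-\pi)/4)$; it is known that $\psi_\beta>0$ on $(0,\beta)$. Set $g(\beta,\theta)=\sin\theta\,\psi_\beta'(\theta)/\psi_\beta(\theta)$ for $0<\theta\le\pi/2$. *)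

theory Defs
  imports "HOL-Analysis.Analysis"
begin

definition beta_cr :: real where
  "beta_cr = (THE b. pi < b \<and> b < 2*pi \<and>
      tan ((b - pi)/4) = 4 * (Gamma (3/4::real) / Gamma (1/4::real))^2)"

text \<open>psi_left beta psi psi' : psi (with derivative psi') solves
  psi'' + psi/(4 sin^2) = 0 on (0, pi/2] with the prescribed data at pi/2,
  i.e. psi is the restriction of psi_beta to (0, pi/2].\<close>
definition psi_left :: "real \<Rightarrow> (real \<Rightarrow> real) \<Rightarrow> (real \<Rightarrow> real) \<Rightarrow> bool" where
  "psi_left beta psi psi' \<longleftrightarrow>
     (\<forall>x\<in>{0<..pi/2}.
        (psi has_real_derivative psi' x) (at x within {0<..pi/2}) \<and>
        (psi' has_real_derivative (- psi x / (4 * (sin x)^2))) (at x within {0<..pi/2})) \<and>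
     psi (pi/2) = cos ((beta - pi)/4) \<and>
     psi' (pi/2) = sin ((beta - pi)/4) / 2"

definition g_fun :: "(real \<Rightarrow> real) \<Rightarrow> (real \<Rightarrow> real) \<Rightarrow> real \<Rightarrow> real" where
  "g_fun psi psi' \<theta> = sin \<theta> * psi' \<theta> / psi \<theta>"

end

theory Submission
  imports Defs
begin


lemma gamma_refl: "Gamma (1/4::real) * Gamma (3/4) = pi * sqrt 2"
proof -
  have "Gamma (complex_of_real (1/4)) * Gamma (1 - complex_of_real (1/4)) = of_real pi / sin (of_real pi * complex_of_real (1/4))"
    by (rule Gamma_reflection_complex)
  also have "1 - complex_of_real (1/4) = complex_of_real (3/4)" by simp
  also have "of_real pi * complex_of_real (1/4) = complex_of_real (pi/4)" by simp
  finally have "complex_of_real (Gamma (1/4)) * complex_of_real (Gamma (3/4)) = of_real pi / complex_of_real (sin (pi/4))"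
    by (simp only: Gamma_complex_of_real sin_of_real)
  hence "complex_of_real (Gamma (1/4) * Gamma (3/4)) = complex_of_real (pi / sin (pi/4))"
    by (metis of_real_mult of_real_divide)
  hence "Gamma (1/4::real) * Gamma (3/4) = pi / sin (pi/4)" using of_real_eq_iff by blast
  also have "\<dots> = pi * sqrt 2" by (simp add: sin_45 field_simps real_sqrt_divide)
  finally show ?thesis .
qed

lemma gamma34: "ln (Gamma (3/4::real)) \<le> ln pi / 4"
proof -
  have "(ln \<circ> Gamma) ((1 - 1/2) *\<^sub>R (1/2::real) + (1/2) *\<^sub>R 1) \<le> (1 - 1/2) * (ln \<circ> Gamma) (1/2) + (1/2) * (ln \<circ> Gamma) 1"
    by (rule convex_onD[OF log_convex_Gamma_real]) auto
  thus ?thesis by (simp add: Gamma_one_half_real ln_sqrt)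
qed

lemma c_lt1: "0 < 4 * (Gamma (3/4::real) / Gamma (1/4::real))^2 \<and> 4 * (Gamma (3/4::real) / Gamma (1/4::real))^2 < 1"
proof -
  have p1: "Gamma (1/4::real) > 0" "Gamma (3/4::real) > 0" by (rule Gamma_real_pos, simp)+
  have "ln (Gamma (3/4::real) ^ 4) \<le> ln pi" using gamma34 p1 by (simp add: ln_realpow)
  hence g4: "Gamma (3/4::real) ^ 4 \<le> pi" using p1 by (simp add: ln_le_cancel_iff pi_gt_zero)
  have r: "Gamma (3/4::real) / Gamma (1/4) = Gamma (3/4)^2 / (pi * sqrt 2)"
  proof -
    have nz: "Gamma (3/4::real) \<noteq> 0" using p1 by linarith
    have "Gamma (1/4::real) = pi * sqrt 2 / Gamma (3/4)" using gamma_refl nz by (simp add: eq_divide_eq)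
    thus ?thesis using p1 by (simp add: power2_eq_square)
  qed
  have "4 * (Gamma (3/4::real) / Gamma (1/4::real))^2 = 2 * Gamma (3/4) ^ 4 / pi^2"
    unfolding r by (simp add: power_divide field_simps power_mult_distrib)
  also have "\<dots> \<le> 2 * pi / pi^2" using g4 by (simp add: divide_right_mono)
  also have "\<dots> = 2 / pi" by (simp add: power2_eq_square)
  also have "\<dots> < 1" using pi_gt3 by simp
  finally have "4 * (Gamma (3/4::real) / Gamma (1/4::real))^2 < 1" .
  moreover have "0 < 4 * (Gamma (3/4::real) / Gamma (1/4::real))^2"
    by (intro mult_pos_pos zero_less_power divide_pos_pos p1) simp
  ultimately show ?thesis by blast
qed

lemma beta_cr_lt: "beta_cr < 2*pi"
proof -
  define c where "c = 4 * (Gamma (3/4::real) / Gamma (1/4::real))^2"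
  have c: "0 < c" "c < 1" using c_lt1 unfolding c_def by auto
  have a1: "0 < arctan c" using c(1) by simp
  have "arctan c < arctan 1" using c(2) arctan_less_iff by blast
  hence a2: "arctan c < pi/4" by (simp only: arctan_one)
  note a = a1 a2
  define b where "b = pi + 4 * arctan c"
  have "(b - pi)/4 = arctan c" by (simp add: b_def)
  hence "tan ((b - pi)/4) = c" by (simp add: tan_arctan)
  moreover have "pi < b" "b < 2*pi" using a unfolding b_def by linarith+
  ultimately have P: "pi < b \<and> b < 2*pi \<and> tan ((b - pi)/4) = c" by blast
  have U: "b' = b" if "pi < b' \<and> b' < 2*pi \<and> tan ((b' - pi)/4) = c" for b'
  proof -
    have "(b' - pi)/4 = arctan c"
      using that arctan_tan[of "(b' - pi)/4"] by auto
    thus ?thesis by (simp add: b_def)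
  qed
  have "beta_cr = b" unfolding beta_cr_def c_def[symmetric]
    by (rule the_equality, rule P, erule U)
  thus ?thesis using P by simp
qed

theorem lemma4:
  fixes \<beta>1 \<beta>2 :: real and \<psi>1 \<psi>1' \<psi>2 \<psi>2' :: "real \<Rightarrow> real"
  assumes "pi \<le> \<beta>1" "\<beta>1 < \<beta>2" "\<beta>2 \<le> beta_cr"
    and "psi_left \<beta>1 \<psi>1 \<psi>1'" and "psi_left \<beta>2 \<psi>2 \<psi>2'"
    and "\<forall>x\<in>{0<..pi/2}. \<psi>1 x > 0" and "\<forall>x\<in>{0<..pi/2}. \<psi>2 x > 0"
  shows "\<forall>\<theta>\<in>{0<..pi/2}. g_fun \<psi>1 \<psi>1' \<theta> < g_fun \<psi>2 \<psi>2' \<theta>"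
proof
  let ?S = "{0<..pi/2::real}"
  define W where "W x = \<psi>1 x * \<psi>2' x - \<psi>1' x * \<psi>2 x" for x
  have D: "(W has_field_derivative 0) (at x within ?S)" if x: "x \<in> ?S" for x
  proof -
    from assms(4) x have d1: "(\<psi>1 has_real_derivative \<psi>1' x) (at x within ?S)"
      "(\<psi>1' has_real_derivative (- \<psi>1 x / (4 * (sin x)^2))) (at x within ?S)"
      unfolding psi_left_def by auto
    from assms(5) x have d2: "(\<psi>2 has_real_derivative \<psi>2' x) (at x within ?S)"
      "(\<psi>2' has_real_derivative (- \<psi>2 x / (4 * (sin x)^2))) (at x within ?S)"
      unfolding psi_left_def by auto
    have "(W has_field_derivative
       (\<psi>1 x * (- \<psi>2 x / (4 * (sin x)^2)) + \<psi>1' x * \<psi>2' x -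
        (\<psi>1' x * \<psi>2' x + (- \<psi>1 x / (4 * (sin x)^2)) * \<psi>2 x))) (at x within ?S)"
      unfolding W_def by (intro DERIV_diff DERIV_mult' d1 d2)
    thus ?thesis by (simp add: algebra_simps)
  qed
  obtain C where C: "\<forall>x\<in>?S. W x = C"
    using has_field_derivative_zero_constant[of ?S W] D by auto
  have half: "pi/2 \<in> ?S" by simp
  define a1 where "a1 = (\<beta>1 - pi)/4"
  define a2 where "a2 = (\<beta>2 - pi)/4"
  have "W (pi/2) = (cos a1 * sin a2 - sin a1 * cos a2) / 2"
  proof -
    have "\<psi>1 (pi/2) = cos a1" "\<psi>1' (pi/2) = sin a1 / 2" "\<psi>2 (pi/2) = cos a2" "\<psi>2' (pi/2) = sin a2 / 2"
      using assms(4,5) unfolding psi_left_def a1_def a2_def by auto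
    thus ?thesis unfolding W_def by (simp add: algebra_simps)
  qed
  also have "\<dots> = sin (a2 - a1) / 2" by (simp add: sin_diff algebra_simps)
  finally have Wh: "W (pi/2) = sin (a2 - a1) / 2" .
  have "a2 - a1 < pi" using beta_cr_lt pi_gt_zero assms(1-3) unfolding a1_def a2_def by (simp add: field_simps)
  moreover have "0 < a2 - a1" using assms(2) unfolding a1_def a2_def by (simp add: field_simps)
  ultimately have "sin (a2 - a1) > 0" by (intro sin_gt_zero)
  hence Cpos: "C > 0" using Wh C half by auto
  fix \<theta> assume th: "\<theta> \<in> ?S"
  have p1: "\<psi>1 \<theta> > 0" and p2: "\<psi>2 \<theta> > 0" using assms(6,7) th by auto
  have s: "sin \<theta> > 0" using th by (intro sin_gt_zero) auto
  have "g_fun \<psi>2 \<psi>2' \<theta> - g_fun \<psi>1 \<psi>1' \<theta> = sin \<theta> * W \<theta> / (\<psi>1 \<theta> * \<psi>2 \<theta>)"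
    unfolding g_fun_def W_def using p1 p2 by (simp add: field_simps)
  also have "\<dots> > 0" using C th Cpos p1 p2 s by auto
  finally show "g_fun \<psi>1 \<psi>1' \<theta> < g_fun \<psi>2 \<psi>2' \<theta>" by simp
qed

end
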